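(* Let $X,Y$ be random variables on finite alphabets $\mathcal{X},\mathcal{Y}$ with $I(X;Y)=0$, and let $Z=(X,Y)$ (a random variable on $\mathcal{Z}=\mathcal{X}\times\mathcal{Y}$). Then $\operatorname{Red}(X,Y\to Z)=0$, where $\operatorname{Red}$ is the redundant information defined below.
   Context: For each $y\in\mathcal{Y}$ with $\Pr(Y=y)>0$, let $(A_y,B_y,C_y)$ be the random triple on $\mathcal{X}\times\mathcal{Y}\times\mathcal{Z}$ with $\Pr(A_y=x,B_y=y',C_y=z)=0$ if $\Pr(Z=z)=0$ and $\Pr(A_y=x,B_y=y',C_y=z)=\Pr(X=x,Y=y',Z=z)\Pr(Z=z\mid Y=y)/\Pr(Z=z)$ otherwise. The unique information is $\operatorname{Un}(X\to Z\mid Y)=\sum_{y:\Pr(Y=y)>0}\Pr(Y=y)\,I(A_y;C_y)$ and the redundant information is $\operatorname{Red}(X,Y\to Z)=I(X;Z)-\operatorname{Un}(X\to Z\mid Y)$, where $I$ is mutual information. *)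

theory Defs
  imports Complex_Main
begin

text \<open>Finite alphabets are modelled by finite types. A joint distribution of a
triple (X,Y,Z) is a probability mass function p x y z (nonnegative, summing to 1).
A joint distribution of a pair is q a b.\<close>

definition is_pmf3 :: "('x::finite \<Rightarrow> 'y::finite \<Rightarrow> 'z::finite \<Rightarrow> real) \<Rightarrow> bool" where
  "is_pmf3 p \<longleftrightarrow> (\<forall>x y z. 0 \<le> p x y z) \<and> (\<Sum>x\<in>UNIV. \<Sum>y\<in>UNIV. \<Sum>z\<in>UNIV. p x y z) = 1"

definition mutual_info :: "('a::finite \<Rightarrow> 'b::finite \<Rightarrow> real) \<Rightarrow> real" where
  "mutual_info q = (\<Sum>a\<in>UNIV. \<Sum>b\<in>UNIV. if q a b = 0 then 0
      else q a b * log 2 (q a b / ((\<Sum>b'\<in>UNIV. q a b') * (\<Sum>a'\<in>UNIV. q a' b))))"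

definition PX :: "('x::finite \<Rightarrow> 'y::finite \<Rightarrow> 'z::finite \<Rightarrow> real) \<Rightarrow> 'x \<Rightarrow> real" where
  "PX p x = (\<Sum>y\<in>UNIV. \<Sum>z\<in>UNIV. p x y z)"
definition PY :: "('x::finite \<Rightarrow> 'y::finite \<Rightarrow> 'z::finite \<Rightarrow> real) \<Rightarrow> 'y \<Rightarrow> real" where
  "PY p y = (\<Sum>x\<in>UNIV. \<Sum>z\<in>UNIV. p x y z)"
definition PZ :: "('x::finite \<Rightarrow> 'y::finite \<Rightarrow> 'z::finite \<Rightarrow> real) \<Rightarrow> 'z \<Rightarrow> real" where
  "PZ p z = (\<Sum>x\<in>UNIV. \<Sum>y\<in>UNIV. p x y z)"
definition PXY :: "('x::finite \<Rightarrow> 'y::finite \<Rightarrow> 'z::finite \<Rightarrow> real) \<Rightarrow> 'x \<Rightarrow> 'y \<Rightarrow> real" where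
  "PXY p x y = (\<Sum>z\<in>UNIV. p x y z)"
definition PXZ :: "('x::finite \<Rightarrow> 'y::finite \<Rightarrow> 'z::finite \<Rightarrow> real) \<Rightarrow> 'x \<Rightarrow> 'z \<Rightarrow> real" where
  "PXZ p x z = (\<Sum>y\<in>UNIV. p x y z)"
definition PYZ :: "('x::finite \<Rightarrow> 'y::finite \<Rightarrow> 'z::finite \<Rightarrow> real) \<Rightarrow> 'y \<Rightarrow> 'z \<Rightarrow> real" where
  "PYZ p y z = (\<Sum>x\<in>UNIV. p x y z)"

text \<open>The random triple (A_y, B_y, C_y):
  Pr(A_y=x,B_y=y',C_y=z) = 0 if Pr(Z=z)=0, else Pr(X=x,Y=y',Z=z) Pr(Z=z|Y=y) / Pr(Z=z).\<close>
definition tri :: "('x::finite \<Rightarrow> 'y::finite \<Rightarrow> 'z::finite \<Rightarrow> real) \<Rightarrow> 'y \<Rightarrow> 'x \<Rightarrow> 'y \<Rightarrow> 'z \<Rightarrow> real" where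
  "tri p y x y' z = (if PZ p z = 0 then 0
      else p x y' z * (PYZ p y z / PY p y) / PZ p z)"

definition unique_info :: "('x::finite \<Rightarrow> 'y::finite \<Rightarrow> 'z::finite \<Rightarrow> real) \<Rightarrow> real" where
  "unique_info p = (\<Sum>y\<in>{y. PY p y > 0}.
      PY p y * mutual_info (\<lambda>x z. \<Sum>y'\<in>UNIV. tri p y x y' z))"

definition redundant_info :: "('x::finite \<Rightarrow> 'y::finite \<Rightarrow> 'z::finite \<Rightarrow> real) \<Rightarrow> real" where
  "redundant_info p = mutual_info (PXZ p) - unique_info p"

end

theory Submission
  imports Defs
begin

lemma sum_prod_univ: "(\<Sum>z\<in>(UNIV::('a::finite\<times>'b::finite) set). f z) = (\<Sum>a\<in>UNIV. \<Sum>b\<in>UNIV. f (a,b))"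
  by (simp add: sum.cartesian_product flip: UNIV_Times_UNIV)

lemma sum_if_const: "(\<Sum>b\<in>A. if P then f b else 0) = (if P then sum f A else 0)"
  by simp

context
  fixes p :: "'x::finite \<Rightarrow> 'y::finite \<Rightarrow> ('x \<times> 'y) \<Rightarrow> real"
  assumes nn: "\<And>x y z. 0 \<le> p x y z"
    and supp: "\<And>x y z. z \<noteq> (x, y) \<Longrightarrow> p x y z = 0"
begin

lemma p_eq: "p x y z = (if z = (x,y) then PXY p x y else 0)"
proof -
  have "PXY p x y = (\<Sum>z\<in>UNIV. if z = (x,y) then p x y z else 0)"
    unfolding PXY_def by (rule sum.cong) (auto simp: supp)
  then show ?thesis using supp by auto
qed

lemma q_nn: "0 \<le> PXY p x y" unfolding PXY_def by (simp add: nn sum_nonneg)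

lemma PXZ_eq: "PXZ p x z = (if fst z = x then PXY p x (snd z) else 0)"
  unfolding PXZ_def by (cases z) (auto simp: p_eq[of x] if_distrib cong: if_cong)

lemma PZ_eq: "PZ p z = PXY p (fst z) (snd z)"
proof (cases z)
  case (Pair a b)
  have "PZ p z = (\<Sum>x\<in>UNIV. if x = a then (\<Sum>y\<in>UNIV. if y = b then PXY p x y else 0) else 0)"
    unfolding PZ_def Pair by (rule sum.cong, simp, rule sym, auto simp: p_eq intro!: sum.neutral)
  then show ?thesis using Pair by simp
qed

lemma PY_eq: "PY p y = (\<Sum>x\<in>UNIV. PXY p x y)"
  unfolding PY_def PXY_def by simp

lemma PYZ_eq: "PYZ p y z = (if snd z = y then PXY p (fst z) y else 0)"
  unfolding PYZ_def by (cases z) (auto simp: p_eq if_distrib cong: if_cong)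

lemma r_eq: "(\<Sum>y'\<in>UNIV. tri p y x y' z) = (if z = (x,y) then PXY p x y / PY p y else 0)"
proof (cases z)
  case (Pair a b)
  have "(\<Sum>y'\<in>UNIV. tri p y x y' z) = (\<Sum>y'\<in>UNIV. if y' = b then
     (if z = (x,y) then PXY p x y / PY p y else 0) else 0)"
    unfolding tri_def Pair PZ_eq PYZ_eq by (rule sum.cong) (auto simp: p_eq)
  then show ?thesis by simp
qed

lemma qx_pos: "PXY p x y \<noteq> 0 \<Longrightarrow> 0 < (\<Sum>y'\<in>UNIV. PXY p x y')"
proof -
  assume "PXY p x y \<noteq> 0"
  then have "0 < PXY p x y" using q_nn[of x y] by simp
  also have "\<dots> \<le> (\<Sum>y'\<in>UNIV. PXY p x y')" by (rule member_le_sum) (auto simp: q_nn)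
  finally show ?thesis .
qed

lemma qy_pos: "PXY p x y \<noteq> 0 \<Longrightarrow> 0 < (\<Sum>x'\<in>UNIV. PXY p x' y)"
proof -
  assume "PXY p x y \<noteq> 0"
  then have "0 < PXY p x y" using q_nn[of x y] by simp
  also have "\<dots> \<le> (\<Sum>x'\<in>UNIV. PXY p x' y)" by (rule member_le_sum) (auto simp: q_nn)
  finally show ?thesis .
qed

lemma MI_XZ: "mutual_info (PXZ p) = (\<Sum>x\<in>UNIV. \<Sum>y\<in>UNIV. if PXY p x y = 0 then 0
   else PXY p x y * (- log 2 (\<Sum>y'\<in>UNIV. PXY p x y')))"
proof -
  have m1: "(\<Sum>z\<in>UNIV. PXZ p x z) = (\<Sum>y'\<in>UNIV. PXY p x y')" for x
    by (simp add: sum_prod_univ PXZ_eq sum_if_const)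
  have m2: "(\<Sum>x'\<in>UNIV. PXZ p x' z) = PXY p (fst z) (snd z)" for z
    by (simp add: PXZ_eq)
  show ?thesis unfolding mutual_info_def m1 m2
  proof (rule sum.cong[OF refl])
    fix x
    show "(\<Sum>z\<in>UNIV. if PXZ p x z = 0 then 0 else PXZ p x z *
      log 2 (PXZ p x z / ((\<Sum>y'\<in>UNIV. PXY p x y') * PXY p (fst z) (snd z)))) = 
      (\<Sum>y\<in>UNIV. if PXY p x y = 0 then 0 else PXY p x y * - log 2 (\<Sum>y'\<in>UNIV. PXY p x y'))"
    proof -
      let ?G = "\<lambda>y. if PXY p x y = 0 then 0 else PXY p x y * - log 2 (\<Sum>y'\<in>UNIV. PXY p x y')"
      have "(\<Sum>z\<in>UNIV. if PXZ p x z = 0 then 0 else PXZ p x z *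
      log 2 (PXZ p x z / ((\<Sum>y'\<in>UNIV. PXY p x y') * PXY p (fst z) (snd z)))) =
        (\<Sum>a\<in>UNIV. \<Sum>b\<in>UNIV. if a = x then ?G b else 0)"
        unfolding sum_prod_univ
      proof (intro sum.cong refl)
        fix a b
        show "(if PXZ p x (a,b) = 0 then 0 else PXZ p x (a,b) *
          log 2 (PXZ p x (a,b) / ((\<Sum>y'\<in>UNIV. PXY p x y') * PXY p (fst (a,b)) (snd (a,b))))) =
          (if a = x then ?G b else 0)"
          using qx_pos[of x b] by (auto simp: PXZ_eq log_divide)
      qed
      then show ?thesis by (simp add: sum_if_const)
    qed
  qed
qed


lemma dd: "(\<Sum>a\<in>UNIV. \<Sum>b\<in>UNIV. if a = (x::'a::finite) then (if b = (y::'b::finite) then (G::real) else 0) else 0) = G"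
  by (simp add: sum_if_const sum.delta)

lemma MI_r:
  assumes qy: "0 < PY p y"
  shows "mutual_info (\<lambda>x z. \<Sum>y'\<in>UNIV. tri p y x y' z) = (\<Sum>x\<in>UNIV.
     if PXY p x y = 0 then 0 else PXY p x y / PY p y * (- log 2 (PXY p x y / PY p y)))"
proof -
  define c where "c x = PXY p x y / PY p y" for x
  have r: "(\<Sum>y'\<in>UNIV. tri p y x y' z) = (if z = (x,y) then c x else 0)" for x z
    by (simp add: r_eq c_def)
  have c0: "c x = 0 \<longleftrightarrow> PXY p x y = 0" for x using qy by (simp add: c_def)
  have cnn: "0 \<le> c x" for x using qy q_nn[of x y] by (simp add: c_def)
  have m1: "(\<Sum>z\<in>UNIV. if z = (x,y) then c x else 0) = c x" for x by simp
  have m2: "(\<Sum>x'\<in>UNIV. if z = (x',y) then c x' else 0) = (if snd z = y then c (fst z) else 0)" for z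
    by (cases z) auto
  show ?thesis unfolding mutual_info_def r m1 m2
  proof (rule sum.cong[OF refl])
    fix x
    let ?G = "if PXY p x y = 0 then 0 else PXY p x y / PY p y * (- log 2 (PXY p x y / PY p y))"
    have "(\<Sum>z\<in>UNIV. if (if z = (x, y) then c x else 0) = 0 then 0
             else (if z = (x, y) then c x else 0) *
                  log 2 ((if z = (x, y) then c x else 0) / (c x * (if snd z = y then c (fst z) else 0)))) =
        (\<Sum>a\<in>UNIV. \<Sum>b\<in>UNIV. if a = x then (if b = y then ?G else 0) else 0)"
      unfolding sum_prod_univ
    proof (intro sum.cong refl)
      fix a b
      have "c x \<noteq> 0 \<Longrightarrow> log 2 (c x / (c x * c x)) = - log 2 (c x)"
        using cnn[of x] by (simp add: log_divide)
      then show "(if (if (a,b) = (x, y) then c x else 0) = 0 then 0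
             else (if (a,b) = (x, y) then c x else 0) *
                  log 2 ((if (a,b) = (x, y) then c x else 0) / (c x * (if snd (a,b) = y then c (fst (a,b)) else 0)))) =
           (if a = x then (if b = y then ?G else 0) else 0)"
        using c0[of x] by (auto simp: c_def[symmetric])
    qed
    then show "(\<Sum>z\<in>UNIV. if (if z = (x, y) then c x else 0) = 0 then 0
             else (if z = (x, y) then c x else 0) *
                  log 2 ((if z = (x, y) then c x else 0) / (c x * (if snd z = y then c (fst z) else 0)))) = ?G"
      by (simp only: dd)
  qed
qed

lemma MI_q: "mutual_info (PXY p) = (\<Sum>x\<in>UNIV. \<Sum>y\<in>UNIV. if PXY p x y = 0 then 0
   else PXY p x y * (log 2 (PXY p x y) - log 2 (\<Sum>y'\<in>UNIV. PXY p x y') - log 2 (\<Sum>x'\<in>UNIV. PXY p x' y)))"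
  unfolding mutual_info_def
proof (intro sum.cong refl)
  fix x y
  show "(if PXY p x y = 0 then 0 else PXY p x y * log 2 (PXY p x y / ((\<Sum>b'\<in>UNIV. PXY p x b') * (\<Sum>a'\<in>UNIV. PXY p a' y)))) =
    (if PXY p x y = 0 then 0
   else PXY p x y * (log 2 (PXY p x y) - log 2 (\<Sum>y'\<in>UNIV. PXY p x y') - log 2 (\<Sum>x'\<in>UNIV. PXY p x' y)))"
    using qx_pos[of x y] qy_pos[of x y] q_nn[of x y] by (auto simp: log_divide log_mult)
qed


lemma UN_eq: "unique_info p = (\<Sum>y\<in>UNIV. \<Sum>x\<in>UNIV. if PXY p x y = 0 then 0
   else PXY p x y * (log 2 (\<Sum>x'\<in>UNIV. PXY p x' y) - log 2 (PXY p x y)))"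
proof -
  let ?F = "\<lambda>y. \<Sum>x\<in>UNIV. if PXY p x y = 0 then 0
   else PXY p x y * (log 2 (\<Sum>x'\<in>UNIV. PXY p x' y) - log 2 (PXY p x y))"
  have "unique_info p = (\<Sum>y\<in>{y. PY p y > 0}. ?F y)"
    unfolding unique_info_def
  proof (rule sum.cong[OF refl])
    fix y assume "y \<in> {y. PY p y > 0}"
    then have qy: "PY p y > 0" by simp
    show "PY p y * mutual_info (\<lambda>x z. \<Sum>y'\<in>UNIV. tri p y x y' z) = ?F y"
      unfolding MI_r[OF qy] sum_distrib_left
    proof (rule sum.cong[OF refl])
      fix x
      show "PY p y * (if PXY p x y = 0 then 0 else PXY p x y / PY p y * - log 2 (PXY p x y / PY p y)) =
        (if PXY p x y = 0 then 0 else PXY p x y * (log 2 (\<Sum>x'\<in>UNIV. PXY p x' y) - log 2 (PXY p x y)))"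
        using qy q_nn[of x y] by (auto simp: log_divide PY_eq[symmetric])
    qed
  qed
  also have "\<dots> = (\<Sum>y\<in>UNIV. ?F y)"
  proof (rule sum.mono_neutral_left)
    show "\<forall>y\<in>UNIV - {y. PY p y > 0}. ?F y = 0"
    proof
      fix y assume "y \<in> UNIV - {y. PY p y > 0}"
      then have "PY p y = 0" using PY_eq[of y] sum_nonneg[of UNIV "\<lambda>x. PXY p x y"] q_nn by force
      then have "\<forall>x\<in>UNIV. PXY p x y = 0" unfolding PY_eq by (subst (asm) sum_nonneg_eq_0_iff) (auto simp: q_nn)
      then show "?F y = 0" by simp
    qed
  qed auto
  finally show ?thesis .
qed

lemma RED_eq: "redundant_info p = mutual_info (PXY p)"
proof -
  have "redundant_info p = (\<Sum>x\<in>UNIV. \<Sum>y\<in>UNIV. (if PXY p x y = 0 then 0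
   else PXY p x y * (- log 2 (\<Sum>y'\<in>UNIV. PXY p x y'))) - (if PXY p x y = 0 then 0
   else PXY p x y * (log 2 (\<Sum>x'\<in>UNIV. PXY p x' y) - log 2 (PXY p x y))))"
    unfolding redundant_info_def MI_XZ UN_eq sum_subtractf
    by (subst sum.swap[of _ UNIV UNIV]) simp
  also have "\<dots> = mutual_info (PXY p)" unfolding MI_q
    by (intro sum.cong refl) (simp add: algebra_simps)
  finally show ?thesis .
qed

end
theorem lemma10:
  fixes p :: "'x::finite \<Rightarrow> 'y::finite \<Rightarrow> ('x \<times> 'y) \<Rightarrow> real"
  assumes "is_pmf3 p"
    and "\<And>x y z. z \<noteq> (x, y) \<Longrightarrow> p x y z = 0"
    and "mutual_info (PXY p) = 0"
  shows "redundant_info p = 0"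
proof -
  have nn: "\<And>x y z. 0 \<le> p x y z" using assms(1) unfolding is_pmf3_def by blast
  show ?thesis using RED_eq[of p, OF nn assms(2)] assms(3) by simp
qed

end
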